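(* Let $n\ge1$. For an anticommutative pure basic sequence $\mathbf e$ of length $n$ in a signed group, let $s_+$ (resp. $s_-$) be the number of negative elements among $\{\mathbf e^{\mathbf p}:\mathbf p\in\{0,1\}^n\}$ when $\mathbf e$ is positive (resp. negative). Then: (1) $s_-=s_+$ if and only if $4\mid n$; in this case every pure anticommutative generator of length $n$ admits a replacement which is a pure anticommutative generator of the opposite signature. (2) $s_+=2^{n-1}-2^{n/2-1}\big(\cos\frac{n\pi}{4}+\sin\frac{n\pi}{4}\big)$ and $s_-=2^{n-1}-2^{n/2-1}\big(\cos\frac{n\pi}{4}-\sin\frac{n\pi}{4}\big)$.
   Context: A signed group is a group containing a central element $-1\neq1$ with $(-1)^2=1$ such that any two elements either commute or anticommute ($ef=-fe$) and each element $e$ has signature $e^2\in\{\pm1\}$ (positive if $e^2=1$, negative if $e^2=-1$); a sequence is pure if all its elements have the same signature (positive or negative). For $\mathbf p\in\{0,1\}^n$, $\mathbf e^{\mathbf p}=e_1^{p_1}\cdots e_n^{p_n}$. A sequence is basic if no $\mathbf e^{\mathbf p}$ with $\mathbf p\neq\mathbf0$ equals $\pm1$; a generator is a basic sequence, generating the group $\{\pm\mathbf e^{\mathbf p}\}$, and a replacement of a generator is another generator generating the same group. Anticommutative means any two distinct terms anticommute. *)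

theory Defs
  imports Complex_Main "HOL-Algebra.Group"
begin

definition signed_group :: "('a, 'b) monoid_scheme \<Rightarrow> 'a \<Rightarrow> bool" where
  "signed_group G mo \<longleftrightarrow> group G \<and> mo \<in> carrier G \<and> mo \<noteq> \<one>\<^bsub>G\<^esub>
     \<and> mo \<otimes>\<^bsub>G\<^esub> mo = \<one>\<^bsub>G\<^esub>
     \<and> (\<forall>x\<in>carrier G. mo \<otimes>\<^bsub>G\<^esub> x = x \<otimes>\<^bsub>G\<^esub> mo)
     \<and> (\<forall>x\<in>carrier G. \<forall>y\<in>carrier G.
          x \<otimes>\<^bsub>G\<^esub> y = y \<otimes>\<^bsub>G\<^esub> x \<or> x \<otimes>\<^bsub>G\<^esub> y = mo \<otimes>\<^bsub>G\<^esub> (y \<otimes>\<^bsub>G\<^esub> x))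
     \<and> (\<forall>x\<in>carrier G. x \<otimes>\<^bsub>G\<^esub> x = \<one>\<^bsub>G\<^esub> \<or> x \<otimes>\<^bsub>G\<^esub> x = mo)"

definition positive_el :: "('a, 'b) monoid_scheme \<Rightarrow> 'a \<Rightarrow> bool" where
  "positive_el G x \<longleftrightarrow> x \<otimes>\<^bsub>G\<^esub> x = \<one>\<^bsub>G\<^esub>"

definition negative_el :: "('a, 'b) monoid_scheme \<Rightarrow> 'a \<Rightarrow> 'a \<Rightarrow> bool" where
  "negative_el G mo x \<longleftrightarrow> x \<otimes>\<^bsub>G\<^esub> x = mo"

fun seq_pow :: "('a, 'b) monoid_scheme \<Rightarrow> 'a list \<Rightarrow> bool list \<Rightarrow> 'a" where
  "seq_pow G (x # xs) (b # bs) = (if b then x else \<one>\<^bsub>G\<^esub>) \<otimes>\<^bsub>G\<^esub> seq_pow G xs bs"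
| "seq_pow G _ _ = \<one>\<^bsub>G\<^esub>"

definition exps :: "nat \<Rightarrow> bool list set" where
  "exps n = {p. length p = n}"

definition seq_in :: "('a, 'b) monoid_scheme \<Rightarrow> 'a list \<Rightarrow> bool" where
  "seq_in G es \<longleftrightarrow> set es \<subseteq> carrier G"

definition pure_pos :: "('a, 'b) monoid_scheme \<Rightarrow> 'a list \<Rightarrow> bool" where
  "pure_pos G es \<longleftrightarrow> (\<forall>x\<in>set es. positive_el G x)"

definition pure_neg :: "('a, 'b) monoid_scheme \<Rightarrow> 'a \<Rightarrow> 'a list \<Rightarrow> bool" where
  "pure_neg G mo es \<longleftrightarrow> (\<forall>x\<in>set es. negative_el G mo x)"

definition pure :: "('a, 'b) monoid_scheme \<Rightarrow> 'a \<Rightarrow> 'a list \<Rightarrow> bool" where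
  "pure G mo es \<longleftrightarrow> pure_pos G es \<or> pure_neg G mo es"

definition basic :: "('a, 'b) monoid_scheme \<Rightarrow> 'a \<Rightarrow> 'a list \<Rightarrow> bool" where
  "basic G mo es \<longleftrightarrow> (\<forall>p\<in>exps (length es). p \<noteq> replicate (length es) False \<longrightarrow>
      seq_pow G es p \<noteq> \<one>\<^bsub>G\<^esub> \<and> seq_pow G es p \<noteq> mo)"

definition anticommutative :: "('a, 'b) monoid_scheme \<Rightarrow> 'a \<Rightarrow> 'a list \<Rightarrow> bool" where
  "anticommutative G mo es \<longleftrightarrow> (\<forall>i<length es. \<forall>j<length es. i \<noteq> j \<longrightarrow>
      es ! i \<otimes>\<^bsub>G\<^esub> es ! j = mo \<otimes>\<^bsub>G\<^esub> (es ! j \<otimes>\<^bsub>G\<^esub> es ! i))"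

definition generator :: "('a, 'b) monoid_scheme \<Rightarrow> 'a \<Rightarrow> 'a list \<Rightarrow> bool" where
  "generator G mo es \<longleftrightarrow> seq_in G es \<and> basic G mo es"

definition gen_group :: "('a, 'b) monoid_scheme \<Rightarrow> 'a \<Rightarrow> 'a list \<Rightarrow> 'a set" where
  "gen_group G mo es = {x. \<exists>p\<in>exps (length es).
       x = seq_pow G es p \<or> x = mo \<otimes>\<^bsub>G\<^esub> seq_pow G es p}"

definition replacement :: "('a, 'b) monoid_scheme \<Rightarrow> 'a \<Rightarrow> 'a list \<Rightarrow> 'a list \<Rightarrow> bool" where
  "replacement G mo es fs \<longleftrightarrow> generator G mo fs \<and> gen_group G mo fs = gen_group G mo es"

definition neg_count :: "('a, 'b) monoid_scheme \<Rightarrow> 'a \<Rightarrow> 'a list \<Rightarrow> nat" where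
  "neg_count G mo es = card {x \<in> seq_pow G es ` exps (length es). negative_el G mo x}"

end

theory Submission
  imports Defs
begin

definition sg :: "('a, 'b) monoid_scheme \<Rightarrow> 'a \<Rightarrow> nat \<Rightarrow> 'a" where
  "sg G mo k = (if even k then \<one>\<^bsub>G\<^esub> else mo)"

fun csum :: "(nat \<Rightarrow> nat) \<Rightarrow> bool list \<Rightarrow> nat" where
  "csum c [] = 0"
| "csum c (b # bs) = (if b then c 0 else 0) + csum (\<lambda>j. c (Suc j)) bs"


fun xorl :: "bool list \<Rightarrow> bool list \<Rightarrow> bool list" where
  "xorl (a # as) (b # bs) = (a \<noteq> b) # xorl as bs"
| "xorl _ _ = []"

fun tri :: "nat \<Rightarrow> nat" where
  "tri 0 = 0"
| "tri (Suc k) = tri k + k"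

definition fc :: "nat \<Rightarrow> nat \<Rightarrow> nat" where
  "fc n r = card {p :: bool list. length p = n \<and> count_list p True mod 4 = r}"

lemma tri_odd: "odd (tri k) \<longleftrightarrow> k mod 4 = 2 \<or> k mod 4 = 3"
proof (induction k)
  case (Suc k)
  have "k mod 4 < 4" by simp
  then have "k mod 4 = 0 \<or> k mod 4 = 1 \<or> k mod 4 = 2 \<or> k mod 4 = 3" by auto
  moreover have "odd k \<longleftrightarrow> k mod 4 = 1 \<or> k mod 4 = 3" by presburger
  ultimately show ?case using Suc by (auto simp: mod_Suc)
qed simp

lemma ar: "(r::nat) < 4 \<Longrightarrow> (Suc c mod 4 = r) = (c mod 4 = (r + 3) mod 4)"
proof -
  assume "r < 4"
  then have "r = 0 \<or> r = 1 \<or> r = 2 \<or> r = 3" by auto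
  moreover have "c mod 4 < 4" by simp
  then have "c mod 4 = 0 \<or> c mod 4 = 1 \<or> c mod 4 = 2 \<or> c mod 4 = 3" by auto
  ultimately show ?thesis by (auto simp: mod_Suc)
qed
lemma fin_len: "finite {p :: bool list. length p = n \<and> Q p}"
proof -
  have "finite {p :: bool list. set p \<subseteq> UNIV \<and> length p = n}"
    by (rule finite_lists_length_eq) simp
  then show ?thesis by (rule rev_finite_subset) auto
qed

lemma fc_set_Suc: assumes r: "r < 4" shows "{p :: bool list. length p = Suc n \<and> count_list p True mod 4 = r} =
   Cons False ` {p. length p = n \<and> count_list p True mod 4 = r} \<union>
   Cons True ` {p. length p = n \<and> count_list p True mod 4 = (r + 3) mod 4}"
proof (intro Set.set_eqI)
  fix p :: "bool list"
  note ar = ar[OF r]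
  show "p \<in> {p. length p = Suc n \<and> count_list p True mod 4 = r} \<longleftrightarrow> p \<in> Cons False ` {p. length p = n \<and> count_list p True mod 4 = r} \<union>
   Cons True ` {p. length p = n \<and> count_list p True mod 4 = (r + 3) mod 4}"
  proof (cases p)
    case Nil then show ?thesis by auto
  next
    case (Cons b p')
    have i1: "b # p' \<in> Cons c ` A \<longleftrightarrow> b = c \<and> p' \<in> A" for c A by auto
    show ?thesis
    proof (cases b)
      case True
      then show ?thesis unfolding Cons Un_iff i1 using ar[of "count_list p' True"] by simp
    next
      case False
      then show ?thesis unfolding Cons Un_iff i1 by simp
    qed
  qed
qed

lemma fc_Suc: "r < 4 \<Longrightarrow> fc (Suc n) r = fc n r + fc n ((r + 3) mod 4)"
  unfolding fc_def fc_set_Suc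
  by (subst card_Un_disjoint) (auto simp: fin_len card_image)

lemma fc_0: "fc 0 r = (if r = 0 then 1 else 0)"
proof -
  have "{p :: bool list. length p = 0 \<and> count_list p True mod 4 = r} = (if r = 0 then {[]} else {})"
    by auto
  then show ?thesis unfolding fc_def by simp
qed

lemma fc_sums: "fc n 0 + fc n 2 + (fc n 1 + fc n 3) = 2 ^ n \<and>
   (n \<ge> 1 \<longrightarrow> fc n 0 + fc n 2 = 2 ^ (n - 1) \<and> fc n 1 + fc n 3 = 2 ^ (n - 1))"
proof (induction n)
  case 0 then show ?case by (simp add: fc_0)
next
  case (Suc n)
  then show ?case by (simp add: fc_Suc)
qed

lemma fc_trig: "real (fc n 0) - real (fc n 2) = 2 powr (real n / 2) * cos (real n * pi / 4) \<and>
   real (fc n 1) - real (fc n 3) = 2 powr (real n / 2) * sin (real n * pi / 4)"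
proof (induction n)
  case 0 then show ?case by (simp add: fc_0)
next
  case (Suc n)
  let ?x = "real n * pi / 4" and ?c = "2 powr (real n / 2)"
  have a: "real (Suc n) * pi / 4 = ?x + pi / 4" by (simp add: field_simps)
  have b: "2 powr (real (Suc n) / 2) = ?c * sqrt 2"
    by (simp add: add_divide_distrib powr_add powr_half_sqrt)
  have s2: "sqrt 2 * sqrt 2 = (2::real)" by simp
  have "real (fc (Suc n) 0) - real (fc (Suc n) 2) = (real (fc n 0) - real (fc n 2)) - (real (fc n 1) - real (fc n 3))"
    by (simp add: fc_Suc)
  also have "\<dots> = 2 powr (real (Suc n) / 2) * cos (real (Suc n) * pi / 4)"
    unfolding a b using Suc.IH
    by (simp add: cos_add cos_45 sin_45 algebra_simps) (simp add: mult.assoc[symmetric] s2)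
  finally have 1: "real (fc (Suc n) 0) - real (fc (Suc n) 2) = 2 powr (real (Suc n) / 2) * cos (real (Suc n) * pi / 4)" .
  have "real (fc (Suc n) 1) - real (fc (Suc n) 3) = (real (fc n 1) - real (fc n 3)) + (real (fc n 0) - real (fc n 2))"
    by (simp add: fc_Suc)
  also have "\<dots> = 2 powr (real (Suc n) / 2) * sin (real (Suc n) * pi / 4)"
    unfolding a b using Suc.IH
    by (simp add: sin_add cos_45 sin_45 algebra_simps) (simp add: mult.assoc[symmetric] s2)
  finally show ?case using 1 by simp
qed


lemma tri_odd2: "odd (tri c + c) \<longleftrightarrow> c mod 4 = 1 \<or> c mod 4 = 2"
proof -
  have "odd (tri c + c) \<longleftrightarrow> Suc c mod 4 = 2 \<or> Suc c mod 4 = 3" using tri_odd[of "Suc c"] by simp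
  also have "\<dots> \<longleftrightarrow> c mod 4 = 1 \<or> c mod 4 = 2" using ar[of 2 c] ar[of 3 c] by simp
  finally show ?thesis .
qed

lemma card_split: "a \<noteq> b \<Longrightarrow> card {p :: bool list. length p = n \<and> (count_list p True mod 4 = a \<or> count_list p True mod 4 = b)}
   = fc n a + fc n b"
proof -
  assume ab: "a \<noteq> b"
  have "{p :: bool list. length p = n \<and> (count_list p True mod 4 = a \<or> count_list p True mod 4 = b)}
    = {p. length p = n \<and> count_list p True mod 4 = a} \<union> {p. length p = n \<and> count_list p True mod 4 = b}"
    by auto
  then show ?thesis unfolding fc_def using ab
    by (simp only:) (rule card_Un_disjoint, auto simp: fin_len)
qed

lemma card_pos: "card {p :: bool list. length p = n \<and> odd (tri (count_list p True) + 0 * count_list p True)} = fc n 2 + fc n 3"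
  using card_split[where n=n and a=2 and b=3] by (simp add: tri_odd)

lemma card_neg: "card {p :: bool list. length p = n \<and> odd (tri (count_list p True) + 1 * count_list p True)} = fc n 1 + fc n 2"
  using card_split[where n=n and a=1 and b=2] by (simp only: mult_1 tri_odd2)

lemma powr_m1: "(2::real) powr (real n / 2 - 1) = 2 powr (real n / 2) / 2"
  by (simp add: powr_diff)

lemma fc_pos: "n \<ge> 1 \<Longrightarrow> real (fc n 2 + fc n 3) = 2 ^ (n - 1) - 2 powr (real n / 2 - 1) *
          (cos (real n * pi / 4) + sin (real n * pi / 4))"
proof -
  assume n: "n \<ge> 1"
  have s: "real (fc n 0) + real (fc n 2) = 2 ^ (n - 1)" "real (fc n 1) + real (fc n 3) = 2 ^ (n - 1)"
    using fc_sums[of n] n by (simp_all add: of_nat_add[symmetric] del: of_nat_add)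
  show ?thesis using s fc_trig[of n] unfolding powr_m1 by (simp add: algebra_simps)
qed

lemma fc_neg: "n \<ge> 1 \<Longrightarrow> real (fc n 1 + fc n 2) = 2 ^ (n - 1) - 2 powr (real n / 2 - 1) *
          (cos (real n * pi / 4) - sin (real n * pi / 4))"
proof -
  assume n: "n \<ge> 1"
  have s: "real (fc n 0) + real (fc n 2) = 2 ^ (n - 1)" "real (fc n 1) + real (fc n 3) = 2 ^ (n - 1)"
    using fc_sums[of n] n by (simp_all add: of_nat_add[symmetric] del: of_nat_add)
  show ?thesis using s fc_trig[of n] unfolding powr_m1 by (simp add: algebra_simps)
qed

lemma fc_eq: "fc n 1 + fc n 2 = fc n 2 + fc n 3 \<longleftrightarrow> 4 dvd n"
proof -
  have "fc n 1 + fc n 2 = fc n 2 + fc n 3 \<longleftrightarrow> real (fc n 1) - real (fc n 3) = 0" by simp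
  also have "\<dots> \<longleftrightarrow> sin (real n * pi / 4) = 0" using fc_trig[of n] by simp
  also have "\<dots> \<longleftrightarrow> (\<exists>i::int. real n * pi / 4 = of_int i * pi)" by (rule sin_zero_iff_int2)
  also have "\<dots> \<longleftrightarrow> (\<exists>i::int. int n = 4 * i)"
  proof
    assume "\<exists>i::int. real n * pi / 4 = of_int i * pi"
    then obtain i :: int where "real n * pi / 4 = of_int i * pi" by blast
    then have "real n = 4 * of_int i" by (simp add: field_simps)
    then have "int n = 4 * i" by (metis of_int_eq_iff of_int_mult of_int_numeral of_int_of_nat_eq)
    then show "\<exists>i::int. int n = 4 * i" by blast
  next
    assume "\<exists>i::int. int n = 4 * i"
    then obtain i :: int where "int n = 4 * i" by blast
    then have "real n = 4 * of_int i" by (metis of_int_eq_iff of_int_mult of_int_numeral of_int_of_nat_eq)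
    then show "\<exists>i::int. real n * pi / 4 = of_int i * pi" by (intro exI[of _ i]) simp
  qed
  also have "\<dots> \<longleftrightarrow> 4 dvd n" by presburger
  finally show ?thesis .
qed


locale sgrp =
  fixes G :: "('a, 'b) monoid_scheme" (structure) and mo :: 'a
  assumes S: "signed_group G mo"

sublocale sgrp \<subseteq> group G using S unfolding signed_group_def by simp

context sgrp begin

lemma mo_c[simp]: "mo \<in> carrier G" using S unfolding signed_group_def by simp
lemma mo_ne: "mo \<noteq> \<one>" using S unfolding signed_group_def by simp
lemma mo_sq: "mo \<otimes> mo = \<one>" using S unfolding signed_group_def by simp
lemma sqr: "x \<in> carrier G \<Longrightarrow> x \<otimes> x = \<one> \<or> x \<otimes> x = mo"
  using S unfolding signed_group_def by simp
lemma mo_central: "x \<in> carrier G \<Longrightarrow> mo \<otimes> x = x \<otimes> mo"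
  using S unfolding signed_group_def by simp

lemma sg_c[simp]: "sg G mo k \<in> carrier G" by (simp add: sg_def)
lemma sg_0[simp]: "sg G mo 0 = \<one>" by (simp add: sg_def)
lemma sg_1: "mo = sg G mo 1" by (simp add: sg_def)
lemma sg_add: "sg G mo a \<otimes> sg G mo b = sg G mo (a + b)"
  by (simp add: sg_def mo_sq)
lemma sg_assoc: "x \<in> carrier G \<Longrightarrow> sg G mo a \<otimes> (sg G mo b \<otimes> x) = sg G mo (a + b) \<otimes> x"
  by (simp add: sg_add[symmetric] m_assoc)
lemma sg_rc: "x \<in> carrier G \<Longrightarrow> x \<otimes> sg G mo k = sg G mo k \<otimes> x"
  by (simp add: sg_def mo_central)
lemma sg_lc: "x \<in> carrier G \<Longrightarrow> y \<in> carrier G \<Longrightarrow> x \<otimes> (sg G mo k \<otimes> y) = sg G mo k \<otimes> (x \<otimes> y)"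
  by (simp add: m_assoc[symmetric] sg_rc)
lemma sg_mo_iff: "sg G mo k = mo \<longleftrightarrow> odd k" using mo_ne by (auto simp: sg_def)
lemma sg_one_iff: "sg G mo k = \<one> \<longleftrightarrow> even k" using mo_ne by (auto simp: sg_def)
lemma sg_par: "sg G mo a = sg G mo b \<longleftrightarrow> (even a \<longleftrightarrow> even b)"
  using mo_ne by (auto simp: sg_def)
lemma sg_double: "sg G mo (a + a) = \<one>" by (simp add: sg_def)
lemma sg_of: "x \<in> carrier G \<Longrightarrow> x \<otimes> x = \<one> \<or> x \<otimes> x = mo \<Longrightarrow> \<exists>k. x \<otimes> x = sg G mo k"
  by (metis sg_0 sg_1)
lemma sg_solve: "x \<in> carrier G \<Longrightarrow> sg G mo a \<otimes> x = sg G mo b \<Longrightarrow> x = sg G mo (a + b)"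
proof -
  assume x: "x \<in> carrier G" and e: "sg G mo a \<otimes> x = sg G mo b"
  have "sg G mo a \<otimes> (sg G mo a \<otimes> x) = sg G mo a \<otimes> sg G mo b" using e by simp
  then show ?thesis using x by (simp add: sg_assoc sg_double sg_add)
qed
lemma sg_cancel: "x \<in> carrier G \<Longrightarrow> sg G mo a \<otimes> x = sg G mo b \<otimes> x \<Longrightarrow> even a = even b"
  using right_cancel sg_c sg_par by blast

lemma seq_pow_c[simp]: "set xs \<subseteq> carrier G \<Longrightarrow> seq_pow G xs bs \<in> carrier G"
proof (induction xs arbitrary: bs)
  case (Cons x xs) then show ?case by (cases bs) auto
qed simp

lemma seq_comm:
  "set xs \<subseteq> carrier G \<Longrightarrow> y \<in> carrier G \<Longrightarrow> length bs = length xs \<Longrightarrow>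
   (\<forall>j<length xs. xs!j \<otimes> y = sg G mo (c j) \<otimes> (y \<otimes> xs!j)) \<Longrightarrow>
   seq_pow G xs bs \<otimes> y = sg G mo (csum c bs) \<otimes> (y \<otimes> seq_pow G xs bs)"
proof (induction xs arbitrary: bs c)
  case Nil then show ?case by simp
next
  case (Cons x xs)
  then obtain b bs' where bs: "bs = b # bs'" by (cases bs) auto
  have x: "x \<in> carrier G" and xs: "set xs \<subseteq> carrier G" using Cons by auto
  have IH: "seq_pow G xs bs' \<otimes> y = sg G mo (csum (\<lambda>j. c (Suc j)) bs') \<otimes> (y \<otimes> seq_pow G xs bs')"
    using Cons.prems bs by (intro Cons.IH) auto
  have c0: "x \<otimes> y = sg G mo (c 0) \<otimes> (y \<otimes> x)" using Cons.prems(4)[rule_format, of 0] by simp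
  have P: "seq_pow G xs bs' \<in> carrier G" using xs by simp
  have y: "y \<in> carrier G" by fact
  let ?t = "csum (\<lambda>j. c (Suc j)) bs'"
  show ?case
  proof (cases b)
    case True
    have "seq_pow G (x # xs) bs \<otimes> y = x \<otimes> (seq_pow G xs bs' \<otimes> y)"
      using True bs x y P by (simp add: m_assoc)
    also have "\<dots> = x \<otimes> (sg G mo ?t \<otimes> (y \<otimes> seq_pow G xs bs'))" using IH by simp
    also have "\<dots> = sg G mo ?t \<otimes> (x \<otimes> (y \<otimes> seq_pow G xs bs'))"
      using x y P by (simp add: sg_lc)
    also have "\<dots> = sg G mo ?t \<otimes> ((x \<otimes> y) \<otimes> seq_pow G xs bs')"
      using x y P by (simp add: m_assoc)
    also have "\<dots> = sg G mo ?t \<otimes> (sg G mo (c 0) \<otimes> (y \<otimes> (x \<otimes> seq_pow G xs bs')))"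
      using x y P c0 by (simp add: m_assoc)
    also have "\<dots> = sg G mo (csum c bs) \<otimes> (y \<otimes> seq_pow G (x # xs) bs)"
      using x y P True bs by (simp add: sg_assoc add.commute)
    finally show ?thesis .
  next
    case False
    then show ?thesis using IH bs x y P by simp
  qed
qed


lemma csum_one: "csum (\<lambda>_. Suc 0) bs = count_list bs True"
  by (induction bs) auto

lemma ac_tail: "anticommutative G mo (x # xs) \<Longrightarrow> anticommutative G mo xs"
  unfolding anticommutative_def
proof (intro allI impI)
  fix i j assume A: "\<forall>i<length (x # xs). \<forall>j<length (x # xs). i \<noteq> j \<longrightarrow>
      (x # xs) ! i \<otimes> (x # xs) ! j = mo \<otimes> ((x # xs) ! j \<otimes> (x # xs) ! i)"
    and ij: "i < length xs" "j < length xs" "i \<noteq> j"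
  show "xs ! i \<otimes> xs ! j = mo \<otimes> (xs ! j \<otimes> xs ! i)"
    using A[rule_format, of "Suc i" "Suc j"] ij by simp
qed

lemma ac_head: "anticommutative G mo (x # xs) \<Longrightarrow> j < length xs \<Longrightarrow> xs ! j \<otimes> x = mo \<otimes> (x \<otimes> xs ! j)"
  unfolding anticommutative_def
  apply (drule spec[of _ "Suc j"])
  apply (drule mp, simp)
  apply (drule spec[of _ 0])
  by simp

lemma ac_head1: "anticommutative G mo (x # xs) \<Longrightarrow> \<forall>j<length xs. xs ! j \<otimes> x = sg G mo ((\<lambda>_. 1) j) \<otimes> (x \<otimes> xs ! j)"
  using ac_head by (simp add: sg_def)

lemma sg_mid: "A \<in> carrier G \<Longrightarrow> B \<in> carrier G \<Longrightarrow>
   sg G mo u \<otimes> ((sg G mo v \<otimes> A) \<otimes> (sg G mo t \<otimes> B)) = sg G mo (u + v + t) \<otimes> (A \<otimes> B)"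
proof -
  assume A: "A \<in> carrier G" and B: "B \<in> carrier G"
  have "(sg G mo v \<otimes> A) \<otimes> (sg G mo t \<otimes> B) = sg G mo v \<otimes> (A \<otimes> (sg G mo t \<otimes> B))"
    using A B by (simp add: m_assoc)
  also have "\<dots> = sg G mo v \<otimes> (sg G mo t \<otimes> (A \<otimes> B))" using sg_lc[OF A B, of t] by simp
  also have "\<dots> = sg G mo (v + t) \<otimes> (A \<otimes> B)" using A B by (simp add: sg_assoc)
  finally show ?thesis using A B by (simp add: sg_assoc add.assoc)
qed

lemma seq_sq:
  "set xs \<subseteq> carrier G \<Longrightarrow> anticommutative G mo xs \<Longrightarrow> (\<forall>x\<in>set xs. x \<otimes> x = sg G mo \<sigma>) \<Longrightarrow>
   length bs = length xs \<Longrightarrow>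
   seq_pow G xs bs \<otimes> seq_pow G xs bs = sg G mo (tri (count_list bs True) + \<sigma> * count_list bs True)"
proof (induction xs arbitrary: bs)
  case Nil then show ?case by simp
next
  case (Cons x xs)
  then obtain b bs' where bs: "bs = b # bs'" by (cases bs) auto
  have x: "x \<in> carrier G" and xs: "set xs \<subseteq> carrier G" using Cons by auto
  have P: "seq_pow G xs bs' \<in> carrier G" using xs by simp
  let ?P = "seq_pow G xs bs'"
  let ?k = "count_list bs' True"
  have IH: "?P \<otimes> ?P = sg G mo (tri ?k + \<sigma> * ?k)"
    using Cons.prems bs ac_tail by (intro Cons.IH) auto
  have xx: "x \<otimes> x = sg G mo \<sigma>" using Cons.prems(3) by simp
  have cm: "?P \<otimes> x = sg G mo ?k \<otimes> (x \<otimes> ?P)"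
    using seq_comm[OF xs x, of bs' "\<lambda>_. 1"] Cons.prems(4) bs ac_head1[OF Cons.prems(2)]
    by (simp add: csum_one)
  show ?case
  proof (cases b)
    case True
    have "seq_pow G (x # xs) bs \<otimes> seq_pow G (x # xs) bs = x \<otimes> ((?P \<otimes> x) \<otimes> ?P)"
      using True bs x P by (simp add: m_assoc)
    also have "\<dots> = x \<otimes> (sg G mo ?k \<otimes> (x \<otimes> (?P \<otimes> ?P)))" using cm x P by (simp add: m_assoc)
    also have "\<dots> = sg G mo ?k \<otimes> ((x \<otimes> x) \<otimes> (?P \<otimes> ?P))" using x P by (simp add: sg_lc m_assoc)
    also have "\<dots> = sg G mo (?k + (\<sigma> + (tri ?k + \<sigma> * ?k)))" using xx IH by (simp add: sg_add)
    also have "\<dots> = sg G mo (tri (count_list bs True) + \<sigma> * count_list bs True)"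
      using True bs by (simp add: algebra_simps)
    finally show ?thesis .
  next
    case False
    then show ?thesis using IH bs x P by simp
  qed
qed

lemma X_prod: "x \<in> carrier G \<Longrightarrow>
  \<exists>v. (if a then x else \<one>) \<otimes> (if b then x else \<one>) = sg G mo v \<otimes> (if a \<noteq> b then x else \<one>)"
proof -
  assume x: "x \<in> carrier G"
  have s: "\<exists>v. x \<otimes> x = sg G mo v" using sqr[OF x] sg_of[OF x] by blast
  show ?thesis
  proof (cases a; cases b)
    assume "a" "b" then show ?thesis using s by simp
  next
    assume "a" "\<not> b" then show ?thesis using x by (intro exI[of _ 0]) simp
  next
    assume "\<not> a" "b" then show ?thesis using x by (intro exI[of _ 0]) simp
  next
    assume "\<not> a" "\<not> b" then show ?thesis using x by (intro exI[of _ 0]) simp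
  qed
qed

lemma seq_prod:
  "set xs \<subseteq> carrier G \<Longrightarrow> anticommutative G mo xs \<Longrightarrow> length p = length xs \<Longrightarrow> length q = length xs \<Longrightarrow>
   \<exists>t. seq_pow G xs p \<otimes> seq_pow G xs q = sg G mo t \<otimes> seq_pow G xs (xorl p q)"
proof (induction xs arbitrary: p q)
  case Nil then show ?case by (intro exI[of _ 0]) simp
next
  case (Cons x xs)
  then obtain a p' where p: "p = a # p'" by (cases p) auto
  from Cons obtain b q' where q: "q = b # q'" by (cases q) auto
  have x: "x \<in> carrier G" and xs: "set xs \<subseteq> carrier G" using Cons by auto
  let ?P = "seq_pow G xs p'" and ?Q = "seq_pow G xs q'" and ?R = "seq_pow G xs (xorl p' q')"
  have PQ: "?P \<in> carrier G" "?Q \<in> carrier G" "?R \<in> carrier G" using xs by auto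
  obtain t where IH: "?P \<otimes> ?Q = sg G mo t \<otimes> ?R"
  proof -
    have "\<exists>t. ?P \<otimes> ?Q = sg G mo t \<otimes> ?R"
      using Cons.IH[of p' q'] xs ac_tail[OF Cons.prems(2)] Cons.prems(3,4) p q by simp
    then show ?thesis using that by blast
  qed
  let ?Xa = "if a then x else \<one>" and ?Xb = "if b then x else \<one>" and ?Xab = "if a \<noteq> b then x else \<one>"
  have X: "?Xa \<in> carrier G" "?Xb \<in> carrier G" "?Xab \<in> carrier G" using x by auto
  have "\<exists>u. ?P \<otimes> ?Xb = sg G mo u \<otimes> (?Xb \<otimes> ?P)"
  proof (cases b)
    case True
    have "?P \<otimes> x = sg G mo (count_list p' True) \<otimes> (x \<otimes> ?P)"
      using seq_comm[OF xs x, of p' "\<lambda>_. 1"] Cons.prems(3) p ac_head1[OF Cons.prems(2)]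
      by (simp add: csum_one)
    then show ?thesis using True by auto
  next
    case False then show ?thesis using PQ by (intro exI[of _ 0]) simp
  qed
  then obtain u where u: "?P \<otimes> ?Xb = sg G mo u \<otimes> (?Xb \<otimes> ?P)" by blast
  obtain v where v: "?Xa \<otimes> ?Xb = sg G mo v \<otimes> ?Xab" using X_prod[OF x] by blast
  have "seq_pow G (x # xs) p \<otimes> seq_pow G (x # xs) q = ?Xa \<otimes> ((?P \<otimes> ?Xb) \<otimes> ?Q)"
    using p q X PQ by (simp add: m_assoc)
  also have "\<dots> = ?Xa \<otimes> (sg G mo u \<otimes> (?Xb \<otimes> (?P \<otimes> ?Q)))" using u X PQ by (simp add: m_assoc)
  also have "\<dots> = sg G mo u \<otimes> ((?Xa \<otimes> ?Xb) \<otimes> (?P \<otimes> ?Q))"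
    using X PQ by (simp add: sg_lc m_assoc del: if_image_distrib)
  also have "\<dots> = sg G mo u \<otimes> ((sg G mo v \<otimes> ?Xab) \<otimes> (sg G mo t \<otimes> ?R))" using u v IH by simp
  also have "\<dots> = sg G mo (u + v + t) \<otimes> (?Xab \<otimes> ?R)" using X PQ by (simp add: sg_mid)
  also have "\<dots> = sg G mo (u + v + t) \<otimes> seq_pow G (x # xs) (xorl p q)" using p q by simp
  finally show ?case by blast
qed


lemma xorl_len: "length p = length q \<Longrightarrow> length (xorl p q) = length p"
  by (induction p q rule: xorl.induct) auto

lemma xorl_zero: "length p = length q \<Longrightarrow> xorl p q = replicate (length p) False \<Longrightarrow> p = q"
  by (induction p q rule: xorl.induct) auto

lemma sg_cases: "sg G mo k = \<one> \<or> sg G mo k = mo" by (simp add: sg_def)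

lemma seq_inj:
  assumes xs: "set xs \<subseteq> carrier G" and ac: "anticommutative G mo xs" and bas: "basic G mo xs"
    and lp: "length p = length xs" and lq: "length q = length xs"
    and e: "sg G mo a \<otimes> seq_pow G xs p = sg G mo b \<otimes> seq_pow G xs q"
  shows "p = q \<and> (even a \<longleftrightarrow> even b)"
proof -
  let ?P = "seq_pow G xs p" and ?Q = "seq_pow G xs q" and ?X = "seq_pow G xs (xorl p q)"
  have c: "?P \<in> carrier G" "?Q \<in> carrier G" "?X \<in> carrier G" using xs by auto
  obtain w where w: "?Q \<otimes> ?Q = sg G mo w" using sg_of[OF c(2) sqr[OF c(2)]] by blast
  obtain t where t: "?P \<otimes> ?Q = sg G mo t \<otimes> ?X" using seq_prod[OF xs ac lp lq] by blast
  have "(sg G mo a \<otimes> ?P) \<otimes> ?Q = (sg G mo b \<otimes> ?Q) \<otimes> ?Q" using e by simp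
  then have "sg G mo a \<otimes> (sg G mo t \<otimes> ?X) = sg G mo b \<otimes> sg G mo w"
    using c by (simp add: m_assoc t w)
  then have "sg G mo (a + t) \<otimes> ?X = sg G mo (b + w)" using c by (simp add: sg_assoc sg_add)
  then have X: "?X = sg G mo (a + t + (b + w))" using sg_solve c by blast
  have "xorl p q = replicate (length xs) False"
  proof (rule ccontr)
    assume "xorl p q \<noteq> replicate (length xs) False"
    then have "?X \<noteq> \<one> \<and> ?X \<noteq> mo" using bas lp lq xorl_len[of p q]
      unfolding basic_def exps_def by auto
    then show False using X sg_cases by metis
  qed
  then have pq: "p = q" using xorl_zero[of p q] lp lq by simp
  then show ?thesis using e sg_cancel c by blast
qed


lemma neg_count_eq:
  assumes xs: "set xs \<subseteq> carrier G" and ac: "anticommutative G mo xs" and bas: "basic G mo xs"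
    and sq: "\<forall>x\<in>set xs. x \<otimes> x = sg G mo \<sigma>"
  shows "neg_count G mo xs = card {p :: bool list. length p = length xs \<and>
           odd (tri (count_list p True) + \<sigma> * count_list p True)}"
proof -
  let ?E = "exps (length xs)"
  have inj: "inj_on (seq_pow G xs) ?E"
  proof (rule inj_onI)
    fix p q assume p: "p \<in> ?E" and q: "q \<in> ?E" and e: "seq_pow G xs p = seq_pow G xs q"
    have "sg G mo 0 \<otimes> seq_pow G xs p = sg G mo 0 \<otimes> seq_pow G xs q" using e by simp
    then show "p = q" using seq_inj[OF xs ac bas] p q unfolding exps_def by blast
  qed
  have "{x \<in> seq_pow G xs ` ?E. negative_el G mo x} = seq_pow G xs ` {p \<in> ?E. negative_el G mo (seq_pow G xs p)}"
    by auto
  then have "neg_count G mo xs = card {p \<in> ?E. negative_el G mo (seq_pow G xs p)}"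
    unfolding neg_count_def by (metis (no_types, lifting) card_image inj_on_subset[OF inj] mem_Collect_eq subsetI)
  also have "{p \<in> ?E. negative_el G mo (seq_pow G xs p)} = {p :: bool list. length p = length xs \<and>
           odd (tri (count_list p True) + \<sigma> * count_list p True)}"
  proof -
    have key: "negative_el G mo (seq_pow G xs p) \<longleftrightarrow> odd (tri (count_list p True) + \<sigma> * count_list p True)"
      if "length p = length xs" for p
      using seq_sq[OF xs ac sq that] unfolding negative_el_def by (simp only: sg_mo_iff)
    show ?thesis unfolding exps_def using key by blast
  qed
  finally show ?thesis .
qed

lemma csum_rep: "i < n \<Longrightarrow> csum (\<lambda>j. if j = i then 0 else Suc 0) (replicate n True) = n - 1"
proof (induction n arbitrary: i)
  case 0 then show ?case by simp
next
  case (Suc n)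
  show ?case
  proof (cases i)
    case 0
    have "count_list (replicate n True) True = n" by (induction n) auto
    then show ?thesis using csum_one[of "replicate n True"] 0 by simp
  next
    case (Suc i')
    then have "csum (\<lambda>j. if j = i' then 0 else Suc 0) (replicate n True) = n - 1"
      using Suc.prems by (intro Suc.IH) simp
    then show ?thesis using Suc Suc.prems by simp
  qed
qed

lemma wprod:
  assumes w: "w \<in> carrier G" and a: "a \<in> carrier G" and b: "b \<in> carrier G"
    and ww: "w \<otimes> w = \<one>" and aw: "a \<otimes> w = mo \<otimes> (w \<otimes> a)"
  shows "(w \<otimes> a) \<otimes> (w \<otimes> b) = mo \<otimes> (a \<otimes> b)"
proof -
  have "(w \<otimes> a) \<otimes> (w \<otimes> b) = w \<otimes> ((a \<otimes> w) \<otimes> b)" using w a b by (simp add: m_assoc)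
  also have "\<dots> = w \<otimes> (mo \<otimes> (w \<otimes> (a \<otimes> b)))" using aw w a b by (simp add: m_assoc)
  also have "\<dots> = (w \<otimes> mo) \<otimes> (w \<otimes> (a \<otimes> b))" using w a b by (simp add: m_assoc)
  also have "\<dots> = (mo \<otimes> w) \<otimes> (w \<otimes> (a \<otimes> b))" using mo_central[OF w] by simp
  also have "\<dots> = mo \<otimes> ((w \<otimes> w) \<otimes> (a \<otimes> b))" using w a b by (simp add: m_assoc)
  also have "\<dots> = mo \<otimes> (a \<otimes> b)" using ww a b by simp
  finally show ?thesis .
qed

lemma seq_map:
  "set ys \<subseteq> carrier G \<Longrightarrow> w \<in> carrier G \<Longrightarrow> w \<otimes> w = \<one> \<Longrightarrow>
   (\<forall>x\<in>set ys. x \<otimes> w = mo \<otimes> (w \<otimes> x)) \<Longrightarrow> length p = length ys \<Longrightarrow>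
   \<exists>t. seq_pow G (map (\<lambda>x. w \<otimes> x) ys) p =
        sg G mo t \<otimes> ((if odd (count_list p True) then w else \<one>) \<otimes> seq_pow G ys p)"
proof (induction ys arbitrary: p)
  case Nil then show ?case by (intro exI[of _ 0]) simp
next
  case (Cons x ys)
  then obtain b p' where p: "p = b # p'" by (cases p) auto
  have x: "x \<in> carrier G" and ys: "set ys \<subseteq> carrier G" using Cons by auto
  have w: "w \<in> carrier G" and ww: "w \<otimes> w = \<one>" by fact+
  have xw: "x \<otimes> w = mo \<otimes> (w \<otimes> x)" using Cons.prems(4) by simp
  let ?P = "seq_pow G ys p'" and ?k = "count_list p' True"
  have P: "?P \<in> carrier G" using ys by simp
  obtain t where t: "seq_pow G (map (\<lambda>x. w \<otimes> x) ys) p' = sg G mo t \<otimes> ((if odd ?k then w else \<one>) \<otimes> ?P)"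
    using Cons.IH[of p'] ys w ww Cons.prems(4,5) p by auto
  show ?case
  proof (cases b)
    case False
    then show ?thesis using t p P w by (intro exI[of _ t]) simp
  next
    case True
    show ?thesis
    proof (cases "odd ?k")
      case True
      have "seq_pow G (map (\<lambda>x. w \<otimes> x) (x # ys)) p = (w \<otimes> x) \<otimes> (sg G mo t \<otimes> (w \<otimes> ?P))"
        using t p True \<open>b\<close> by simp
      also have "\<dots> = sg G mo t \<otimes> ((w \<otimes> x) \<otimes> (w \<otimes> ?P))" using w x P by (simp add: sg_lc)
      also have "\<dots> = sg G mo t \<otimes> (mo \<otimes> (x \<otimes> ?P))" using wprod[OF w x P ww xw] by simp
      also have "\<dots> = sg G mo t \<otimes> (sg G mo 1 \<otimes> (x \<otimes> ?P))" by (simp add: sg_def)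
      also have "\<dots> = sg G mo (t + 1) \<otimes> (\<one> \<otimes> seq_pow G (x # ys) p)"
        using x P p \<open>b\<close> by (simp add: sg_assoc)
      finally show ?thesis using p \<open>b\<close> True by auto
    next
      case False
      have "seq_pow G (map (\<lambda>x. w \<otimes> x) (x # ys)) p = (w \<otimes> x) \<otimes> (sg G mo t \<otimes> (\<one> \<otimes> ?P))"
        using t p False \<open>b\<close> by simp
      also have "\<dots> = sg G mo t \<otimes> (w \<otimes> seq_pow G (x # ys) p)" using w x P p \<open>b\<close>
        by (simp add: sg_lc m_assoc)
      finally show ?thesis using p \<open>b\<close> False by auto
    qed
  qed
qed

lemma gen_img: "set ys \<subseteq> carrier G \<Longrightarrow>
  gen_group G mo ys = (\<lambda>(k, p). sg G mo k \<otimes> seq_pow G ys p) ` ({0, 1} \<times> exps (length ys))"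
proof (rule Set.set_eqI, rule iffI)
  fix x assume ys: "set ys \<subseteq> carrier G" and "x \<in> gen_group G mo ys"
  then obtain p where p: "p \<in> exps (length ys)" and x: "x = seq_pow G ys p \<or> x = mo \<otimes> seq_pow G ys p"
    unfolding gen_group_def by blast
  have c: "seq_pow G ys p \<in> carrier G" using ys by simp
  show "x \<in> (\<lambda>(k, p). sg G mo k \<otimes> seq_pow G ys p) ` ({0, 1} \<times> exps (length ys))"
  proof (cases "x = seq_pow G ys p")
    case True
    then have "x = (\<lambda>(k, p). sg G mo k \<otimes> seq_pow G ys p) (0, p)" using c by simp
    moreover have "(0::nat, p) \<in> {0, 1} \<times> exps (length ys)" using p by simp
    ultimately show ?thesis by (rule image_eqI)
  next
    case False
    then have "x = mo \<otimes> seq_pow G ys p" using x by blast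
    then have "x = (\<lambda>(k, p). sg G mo k \<otimes> seq_pow G ys p) (1, p)" by (simp add: sg_def)
    moreover have "(1::nat, p) \<in> {0, 1} \<times> exps (length ys)" using p by simp
    ultimately show ?thesis by (rule image_eqI)
  qed
next
  fix x assume ys: "set ys \<subseteq> carrier G"
    and xin: "x \<in> (\<lambda>(k, p). sg G mo k \<otimes> seq_pow G ys p) ` ({0, 1} \<times> exps (length ys))"
  from xin obtain kp where x: "x = (\<lambda>(k, p). sg G mo k \<otimes> seq_pow G ys p) kp" and kp: "kp \<in> {0::nat, 1} \<times> exps (length ys)"
    by (rule imageE)
  obtain k p where kpe: "kp = (k, p)" by (cases kp)
  have k: "k = 0 \<or> k = 1" and p: "p \<in> exps (length ys)" using kp kpe by auto
  have c: "seq_pow G ys p \<in> carrier G" using ys by simp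
  have "x = seq_pow G ys p \<or> x = mo \<otimes> seq_pow G ys p"
    using k x kpe c by (auto simp: sg_def)
  then show "x \<in> gen_group G mo ys" unfolding gen_group_def using p by blast
qed

lemma gen_card:
  assumes ys: "set ys \<subseteq> carrier G" and ac: "anticommutative G mo ys" and bas: "basic G mo ys"
  shows "card (gen_group G mo ys) = card ({0::nat, 1} \<times> exps (length ys))"
proof -
  have "inj_on (\<lambda>(k, p). sg G mo k \<otimes> seq_pow G ys p) ({0, 1} \<times> exps (length ys))"
  proof (rule inj_onI, clarify)
    fix k p k' p' assume k: "k \<in> {0::nat, 1}" and p: "p \<in> exps (length ys)" and k': "k' \<in> {0::nat, 1}"
      and p': "p' \<in> exps (length ys)"
      and e: "sg G mo k \<otimes> seq_pow G ys p = sg G mo k' \<otimes> seq_pow G ys p'"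
    have lp: "length p = length ys" "length p' = length ys" using p p' unfolding exps_def by auto
    have "p = p' \<and> (even k \<longleftrightarrow> even k')" by (rule seq_inj[OF ys ac bas lp e])
    then show "k = k' \<and> p = p'" using k k' by auto
  qed
  then show ?thesis using gen_img[OF ys] by (simp add: card_image)
qed


lemma cnt_rep: "count_list (replicate n True) True = n" by (induction n) auto

lemma replace:
  assumes xs: "set xs \<subseteq> carrier G" and ac: "anticommutative G mo xs" and bas: "basic G mo xs"
    and n4: "4 dvd length xs" and n1: "length xs \<ge> 1" and sq: "\<forall>x\<in>set xs. x \<otimes> x = sg G mo \<sigma>"
  shows "\<exists>fs. seq_in G fs \<and> basic G mo fs \<and> anticommutative G mo fs \<and>
     (\<forall>y\<in>set fs. y \<otimes> y = sg G mo (Suc \<sigma>)) \<and> gen_group G mo fs = gen_group G mo xs"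
proof -
  define n where "n = length xs"
  define w where "w = seq_pow G xs (replicate n True)"
  define fs where "fs = map (\<lambda>x. w \<otimes> x) xs"
  have wc: "w \<in> carrier G" using xs unfolding w_def by simp
  have n4': "n mod 4 = 0" using n4 unfolding n_def by simp
  have evn: "even n" using n4' by presburger
  have n1': "n \<ge> 1" using n1 unfolding n_def .
  have odn: "odd (n - 1)" using evn n1' by presburger
  have ww: "w \<otimes> w = \<one>"
  proof -
    have "w \<otimes> w = sg G mo (tri n + \<sigma> * n)"
      using seq_sq[OF xs ac sq, of "replicate n True"] unfolding w_def n_def by (simp add: cnt_rep)
    moreover have "even (tri n)" using tri_odd[of n] n4' by simp
    moreover have "even (\<sigma> * n)" using evn by simp
    ultimately show ?thesis by (simp add: sg_one_iff)
  qed
  have wx: "w \<otimes> xs ! i = mo \<otimes> (xs ! i \<otimes> w)" if i: "i < n" for i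
  proof -
    define c where "c = (\<lambda>j. if j = i then 0 else Suc 0)"
    have xi: "xs ! i \<in> carrier G" using xs i unfolding n_def by auto
    have H: "\<forall>j<length xs. xs ! j \<otimes> xs ! i = sg G mo (c j) \<otimes> (xs ! i \<otimes> xs ! j)"
    proof (intro allI impI)
      fix j assume j: "j < length xs"
      show "xs ! j \<otimes> xs ! i = sg G mo (c j) \<otimes> (xs ! i \<otimes> xs ! j)"
      proof (cases "j = i")
        case True then show ?thesis using xi unfolding c_def by simp
      next
        case False
        then have "xs ! j \<otimes> xs ! i = mo \<otimes> (xs ! i \<otimes> xs ! j)"
          using ac j i unfolding anticommutative_def n_def by blast
        then show ?thesis using False unfolding c_def by (simp add: sg_def)
      qed
    qed
    have "w \<otimes> xs ! i = sg G mo (csum c (replicate n True)) \<otimes> (xs ! i \<otimes> w)"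
      using seq_comm[OF xs xi, of "replicate n True" c] H unfolding w_def n_def by simp
    also have "csum c (replicate n True) = n - 1" unfolding c_def using csum_rep[OF i] .
    finally show ?thesis using odn by (simp add: sg_def)
  qed
  have xw: "\<forall>x\<in>set xs. x \<otimes> w = mo \<otimes> (w \<otimes> x)"
  proof
    fix x assume "x \<in> set xs"
    then obtain i where i: "i < n" and x: "x = xs ! i" unfolding n_def by (auto simp: in_set_conv_nth)
    have xc: "x \<in> carrier G" using xs \<open>x \<in> set xs\<close> by auto
    have "mo \<otimes> (w \<otimes> x) = mo \<otimes> (mo \<otimes> (x \<otimes> w))" using wx[OF i] x by simp
    also have "\<dots> = x \<otimes> w" using xc wc by (simp add: m_assoc[symmetric] mo_sq)
    finally show "x \<otimes> w = mo \<otimes> (w \<otimes> x)" by simp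
  qed
  have lfs: "length fs = n" unfolding fs_def n_def by simp
  have fsi: "fs ! i = w \<otimes> xs ! i" if "i < n" for i using that unfolding fs_def n_def by simp
  have xic: "xs ! i \<in> carrier G" if "i < n" for i using that xs unfolding n_def by auto
  have ff: "fs ! i \<otimes> fs ! j = mo \<otimes> (xs ! i \<otimes> xs ! j)" if "i < n" "j < n" for i j
    using wprod[OF wc xic[OF that(1)] xic[OF that(2)] ww] xw that fsi
    by (simp add: n_def)
  have sin: "seq_in G fs" unfolding seq_in_def fs_def using xs wc by auto
  have acf: "anticommutative G mo fs"
    unfolding anticommutative_def lfs
  proof (intro allI impI)
    fix i j assume i: "i < n" and j: "j < n" and ij: "i \<noteq> j"
    have "xs ! i \<otimes> xs ! j = mo \<otimes> (xs ! j \<otimes> xs ! i)" using ac i j ij unfolding anticommutative_def n_def by blast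
    then show "fs ! i \<otimes> fs ! j = mo \<otimes> (fs ! j \<otimes> fs ! i)" using ff[OF i j] ff[OF j i] by simp
  qed
  have sqf: "\<forall>y\<in>set fs. y \<otimes> y = sg G mo (Suc \<sigma>)"
  proof
    fix y assume "y \<in> set fs"
    then obtain i where i: "i < n" and y: "y = fs ! i" using lfs by (auto simp: in_set_conv_nth)
    have "xs ! i \<otimes> xs ! i = sg G mo \<sigma>" using sq i unfolding n_def by simp
    then show "y \<otimes> y = sg G mo (Suc \<sigma>)" using ff[OF i i] y by (simp add: sg_def mo_sq)
  qed
  have repr: "\<exists>t q. length q = n \<and> seq_pow G fs p = sg G mo t \<otimes> seq_pow G xs q \<and>
      (p \<noteq> replicate n False \<longrightarrow> q \<noteq> replicate n False)" if lp: "length p = n" for p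
  proof -
    obtain t where t: "seq_pow G fs p = sg G mo t \<otimes> ((if odd (count_list p True) then w else \<one>) \<otimes> seq_pow G xs p)"
      using seq_map[OF xs wc ww xw, of p] lp unfolding fs_def n_def by blast
    have Ep: "seq_pow G xs p \<in> carrier G" using xs by simp
    show ?thesis
    proof (cases "odd (count_list p True)")
      case False
      then show ?thesis using t lp Ep by (intro exI[of _ t] exI[of _ p]) simp
    next
      case True
      obtain u where u: "w \<otimes> seq_pow G xs p = sg G mo u \<otimes> seq_pow G xs (xorl (replicate n True) p)"
        using seq_prod[OF xs ac, of "replicate n True" p] lp unfolding w_def n_def by auto
      let ?q = "xorl (replicate n True) p"
      have lq: "length ?q = n" using xorl_len[of "replicate n True" p] lp by simp
      have Eq: "seq_pow G xs ?q \<in> carrier G" using xs by simp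
      have "seq_pow G fs p = sg G mo (t + u) \<otimes> seq_pow G xs ?q" using t True u Eq by (simp add: sg_assoc)
      moreover have "?q \<noteq> replicate n False"
      proof
        assume "?q = replicate n False"
        then have "replicate n True = p" using xorl_zero[of "replicate n True" p] lp by simp
        then have "count_list p True = n" using cnt_rep by metis
        then show False using True evn by simp
      qed
      ultimately show ?thesis using lq by blast
    qed
  qed
  have basf: "basic G mo fs"
    unfolding basic_def lfs
  proof (intro ballI impI)
    fix p assume p: "p \<in> exps n" and pz: "p \<noteq> replicate n False"
    obtain t q where lq: "length q = n" and e: "seq_pow G fs p = sg G mo t \<otimes> seq_pow G xs q"
      and qz: "q \<noteq> replicate n False" using repr[of p] p pz unfolding exps_def by auto
    have Eq: "seq_pow G xs q \<in> carrier G" using xs by simp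
    have nq: "seq_pow G xs q \<noteq> \<one> \<and> seq_pow G xs q \<noteq> mo"
      using bas lq qz unfolding basic_def exps_def n_def by auto
    have "seq_pow G fs p \<noteq> sg G mo k" for k
    proof
      assume "seq_pow G fs p = sg G mo k"
      then have "seq_pow G xs q = sg G mo (t + k)" using e sg_solve[OF Eq] by metis
      then show False using nq sg_cases by metis
    qed
    from this[of 0] this[of 1] show "seq_pow G fs p \<noteq> \<one> \<and> seq_pow G fs p \<noteq> mo" by (simp add: sg_def)
  qed
  have fin: "finite (gen_group G mo xs)"
  proof -
    have "finite (exps n)" unfolding exps_def using fin_len[of n "\<lambda>_. True"] by simp
    then show ?thesis using gen_img[OF xs] unfolding n_def by simp
  qed
  have fsc: "set fs \<subseteq> carrier G" using sin unfolding seq_in_def .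
  have sub: "gen_group G mo fs \<subseteq> gen_group G mo xs"
  proof
    fix x assume "x \<in> gen_group G mo fs"
    then obtain k p where k: "k \<in> {0::nat, 1}" and p: "p \<in> exps n" and x: "x = sg G mo k \<otimes> seq_pow G fs p"
      using gen_img[OF fsc] lfs by auto
    obtain t q where lq: "length q = n" and e: "seq_pow G fs p = sg G mo t \<otimes> seq_pow G xs q"
      using repr[of p] p unfolding exps_def by auto
    have Eq: "seq_pow G xs q \<in> carrier G" using xs by simp
    have "x = sg G mo (k + t) \<otimes> seq_pow G xs q" using x e Eq by (simp add: sg_assoc)
    also have "sg G mo (k + t) = sg G mo ((k + t) mod 2)" by (simp add: sg_par)
    finally have "x = (\<lambda>(k, p). sg G mo k \<otimes> seq_pow G xs p) ((k + t) mod 2, q)" by simp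
    moreover have "((k + t) mod 2, q) \<in> {0::nat, 1} \<times> exps (length xs)"
      using lq unfolding exps_def n_def by auto
    ultimately show "x \<in> gen_group G mo xs" unfolding gen_img[OF xs] by (rule image_eqI)
  qed
  have "card (gen_group G mo fs) = card (gen_group G mo xs)"
    using gen_card[OF fsc acf basf] gen_card[OF xs ac bas] lfs unfolding n_def by simp
  then have "gen_group G mo fs = gen_group G mo xs" using card_subset_eq[OF fin sub] by simp
  then show ?thesis using sin basf acf sqf by blast
qed

end

lemma count_pos:
  assumes S: "signed_group G mo" and "seq_in G es" "anticommutative G mo es" "basic G mo es" "pure_pos G es"
  shows "neg_count G mo es = fc (length es) 2 + fc (length es) 3"
proof -
  interpret sgrp G mo using S by (rule sgrp.intro)
  have sq: "\<forall>x\<in>set es. x \<otimes>\<^bsub>G\<^esub> x = sg G mo 0" using assms(5) unfolding pure_pos_def positive_el_def by simp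
  show ?thesis using neg_count_eq[OF _ assms(3,4) sq] assms(2) card_pos unfolding seq_in_def by simp
qed

lemma count_neg:
  assumes S: "signed_group G mo" and "seq_in G es" "anticommutative G mo es" "basic G mo es" "pure_neg G mo es"
  shows "neg_count G mo es = fc (length es) 1 + fc (length es) 2"
proof -
  interpret sgrp G mo using S by (rule sgrp.intro)
  have sq: "\<forall>x\<in>set es. x \<otimes>\<^bsub>G\<^esub> x = sg G mo 1" using assms(5) unfolding pure_neg_def negative_el_def sg_def by simp
  show ?thesis using neg_count_eq[OF _ assms(3,4) sq] assms(2) card_neg unfolding seq_in_def by simp
qed

lemma repl_part:
  assumes S: "signed_group G mo" and gen: "generator G mo es" and n: "length es = n" and n1: "n \<ge> 1"
    and n4: "4 dvd n" and ac: "anticommutative G mo es" and pu: "pure G mo es"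
  shows "\<exists>fs. replacement G mo es fs \<and> anticommutative G mo fs \<and> pure G mo fs \<and>
         (pure_pos G es \<longrightarrow> pure_neg G mo fs) \<and> (pure_neg G mo es \<longrightarrow> pure_pos G fs)"
proof -
  interpret sgrp G mo using S by (rule sgrp.intro)
  have xs: "set es \<subseteq> carrier G" and bas: "basic G mo es" using gen unfolding generator_def seq_in_def by auto
  have ne: "es \<noteq> []" using n n1 by auto
  then have e0: "es ! 0 \<in> set es" by simp
  have notboth: "\<not> (pure_pos G es \<and> pure_neg G mo es)"
    using e0 mo_ne unfolding pure_pos_def pure_neg_def positive_el_def negative_el_def by metis
  show ?thesis
  proof (cases "pure_pos G es")
    case True
    have sq: "\<forall>x\<in>set es. x \<otimes>\<^bsub>G\<^esub> x = sg G mo 0" using True unfolding pure_pos_def positive_el_def by simp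
    obtain fs where fs: "seq_in G fs" "basic G mo fs" "anticommutative G mo fs"
      "\<forall>y\<in>set fs. y \<otimes>\<^bsub>G\<^esub> y = sg G mo (Suc 0)" "gen_group G mo fs = gen_group G mo es"
      using replace[OF xs ac bas _ _ sq] n n1 n4 by auto
    have pn: "pure_neg G mo fs" using fs(4) unfolding pure_neg_def negative_el_def sg_def by simp
    show ?thesis using fs pn True notboth unfolding replacement_def generator_def pure_def by blast
  next
    case False
    then have pn: "pure_neg G mo es" using pu unfolding pure_def by simp
    have sq: "\<forall>x\<in>set es. x \<otimes>\<^bsub>G\<^esub> x = sg G mo 1" using pn unfolding pure_neg_def negative_el_def sg_def by simp
    obtain fs where fs: "seq_in G fs" "basic G mo fs" "anticommutative G mo fs"
      "\<forall>y\<in>set fs. y \<otimes>\<^bsub>G\<^esub> y = sg G mo (Suc 1)" "gen_group G mo fs = gen_group G mo es"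
      using replace[OF xs ac bas _ _ sq] n n1 n4 by auto
    have pp: "pure_pos G fs" using fs(4) unfolding pure_pos_def positive_el_def sg_def by simp
    show ?thesis using fs pp False unfolding replacement_def generator_def pure_def by blast
  qed
qed

theorem proposition4p1:
  fixes n :: nat
  assumes "n \<ge> 1"
  shows
  "(\<forall>(G :: ('a, 'b) monoid_scheme) mo es.
      signed_group G mo \<and> seq_in G es \<and> length es = n \<and> anticommutative G mo es
      \<and> basic G mo es \<and> pure_pos G es \<longrightarrow>
      real (neg_count G mo es) = 2 ^ (n - 1) - 2 powr (real n / 2 - 1) *
          (cos (real n * pi / 4) + sin (real n * pi / 4)))
 \<and>
   (\<forall>(G :: ('a, 'b) monoid_scheme) mo es.
      signed_group G mo \<and> seq_in G es \<and> length es = n \<and> anticommutative G mo es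
      \<and> basic G mo es \<and> pure_neg G mo es \<longrightarrow>
      real (neg_count G mo es) = 2 ^ (n - 1) - 2 powr (real n / 2 - 1) *
          (cos (real n * pi / 4) - sin (real n * pi / 4)))
 \<and>
   (\<forall>(G :: ('a, 'b) monoid_scheme) mo es (H :: ('c, 'd) monoid_scheme) mo' fs.
      signed_group G mo \<and> seq_in G es \<and> length es = n \<and> anticommutative G mo es
      \<and> basic G mo es \<and> pure_pos G es \<and>
      signed_group H mo' \<and> seq_in H fs \<and> length fs = n \<and> anticommutative H mo' fs
      \<and> basic H mo' fs \<and> pure_neg H mo' fs \<longrightarrow>
      (neg_count H mo' fs = neg_count G mo es \<longleftrightarrow> 4 dvd n))
 \<and>
   (4 dvd n \<longrightarrow>
     (\<forall>(G :: ('a, 'b) monoid_scheme) mo es.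
      signed_group G mo \<and> generator G mo es \<and> length es = n \<and> anticommutative G mo es
      \<and> pure G mo es \<longrightarrow>
      (\<exists>fs. replacement G mo es fs \<and> anticommutative G mo fs \<and> pure G mo fs \<and>
         (pure_pos G es \<longrightarrow> pure_neg G mo fs) \<and> (pure_neg G mo es \<longrightarrow> pure_pos G fs))))"
proof (intro conjI allI impI)
  fix G :: "('a, 'b) monoid_scheme" and mo es
  assume h: "signed_group G mo \<and> seq_in G es \<and> length es = n \<and> anticommutative G mo es
      \<and> basic G mo es \<and> pure_pos G es"
  then show "real (neg_count G mo es) = 2 ^ (n - 1) - 2 powr (real n / 2 - 1) *
          (cos (real n * pi / 4) + sin (real n * pi / 4))"
    using count_pos[of G mo es] fc_pos[OF assms] by (simp only:)
next
  fix G :: "('a, 'b) monoid_scheme" and mo es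
  assume h: "signed_group G mo \<and> seq_in G es \<and> length es = n \<and> anticommutative G mo es
      \<and> basic G mo es \<and> pure_neg G mo es"
  then show "real (neg_count G mo es) = 2 ^ (n - 1) - 2 powr (real n / 2 - 1) *
          (cos (real n * pi / 4) - sin (real n * pi / 4))"
    using count_neg[of G mo es] fc_neg[OF assms] by (simp only:)
next
  fix G :: "('a, 'b) monoid_scheme" and mo es and H :: "('c, 'd) monoid_scheme" and mo' fs
  assume h: "signed_group G mo \<and> seq_in G es \<and> length es = n \<and> anticommutative G mo es
      \<and> basic G mo es \<and> pure_pos G es \<and>
      signed_group H mo' \<and> seq_in H fs \<and> length fs = n \<and> anticommutative H mo' fs
      \<and> basic H mo' fs \<and> pure_neg H mo' fs"
  then have "neg_count G mo es = fc n 2 + fc n 3" "neg_count H mo' fs = fc n 1 + fc n 2"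
    using count_pos[of G mo es] count_neg[of H mo' fs] by auto
  then show "neg_count H mo' fs = neg_count G mo es \<longleftrightarrow> 4 dvd n" using fc_eq[of n] by simp
next
  fix G :: "('a, 'b) monoid_scheme" and mo es
  assume "4 dvd n" and h: "signed_group G mo \<and> generator G mo es \<and> length es = n \<and> anticommutative G mo es
      \<and> pure G mo es"
  then show "\<exists>fs. replacement G mo es fs \<and> anticommutative G mo fs \<and> pure G mo fs \<and>
         (pure_pos G es \<longrightarrow> pure_neg G mo fs) \<and> (pure_neg G mo es \<longrightarrow> pure_pos G fs)"
    using repl_part[of G mo es n] assms by blast
qed

end
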